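(* Let $t(z),d(z)\in\mathbb{C}[[z]]$ with $t^2-4d$ having a simple zero at $z=0$, let $\tilde X=\operatorname{Spf}\mathbb{C}[[\tilde z]]$ be the smooth spectral curve $\xi^2-t\xi+d=0$, with coordinate $\tilde z=\sqrt{t^2-4d}$ and canonical $1$-form $\mu=\xi\,dz|_{\tilde X}$. Let $a(\tilde z,\lambda)=\sum_{i\ge0}a_i(\tilde z)\lambda^i\in\mathbb{C}((\tilde z))[[\lambda]]$ with $a(\tilde z,0)=\mu(d\tilde z)^{-1}$. Let $Y$ be the set of $r(\tilde z,\lambda)\in\mathbb{C}((\tilde z))[[\lambda]]$ such that $r(\tilde z,0)\in\mathbb{C}[[\tilde z]]^\times$ and $a'=a+\lambda r^{-1}\frac{dr}{d\tilde z}$ satisfies $a'\in\tilde z^{-1}\mathbb{C}[[\tilde z,\lambda]]$ and $\operatorname{res}_{\tilde z=0}a'=-\lambda/2$; the group $\mathbb{C}[[\tilde z,\lambda]]^\times$ acts on $Y$ by multiplication. Then $Y$ is either empty or a single $\mathbb{C}[[\tilde z,\lambda]]^\times$-orbit, and $Y$ is non-empty if and only if $a_1(\tilde z)\in\tilde z^{-1}\mathbb{C}[[\tilde z]]$ and $\operatorname{res}_{\tilde z=0}a(\tilde z,\lambda)=-\lambda/2$.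
   Context: Residues of series in $\mathbb{C}((\tilde z))[[\lambda]]$ are taken coefficientwise in $\lambda$ (coefficient of $\tilde z^{-1}$). *)

theory Defs
  imports "HOL-Computational_Algebra.Formal_Laurent_Series"
begin

text \<open>Series in C((zt))[[lambda]] are modelled as complex fls fps:
  a power series in lambda whose coefficients are Laurent series in zt.\<close>

type_synonym lser = "complex fls fps"

definition zt_deriv :: "lser \<Rightarrow> lser" where
  "zt_deriv r = Abs_fps (\<lambda>i. fls_deriv (fps_nth r i))"

definition zt_res :: "lser \<Rightarrow> complex fps" where
  "zt_res a = Abs_fps (\<lambda>i. fls_residue (fps_nth a i))"

definition in_pow :: "complex fls \<Rightarrow> bool" where
  "in_pow f \<longleftrightarrow> f = 0 \<or> fls_subdegree f \<ge> 0"

definition in_pole1 :: "complex fls \<Rightarrow> bool" where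
  "in_pole1 f \<longleftrightarrow> f = 0 \<or> fls_subdegree f \<ge> -1"

definition in_PS2 :: "lser \<Rightarrow> bool" where
  "in_PS2 u \<longleftrightarrow> (\<forall>i. in_pow (fps_nth u i))"

definition units_PS2 :: "lser set" where
  "units_PS2 = {u. in_PS2 u \<and> fls_nth (fps_nth u 0) 0 \<noteq> 0}"

definition in_pole1_PS2 :: "lser \<Rightarrow> bool" where
  "in_pole1_PS2 u \<longleftrightarrow> (\<forall>i. in_pole1 (fps_nth u i))"

definition unit_pow :: "complex fls \<Rightarrow> bool" where
  "unit_pow f \<longleftrightarrow> f \<noteq> 0 \<and> fls_subdegree f = 0"

text \<open>Spectral curve xi^2 - t xi + d = 0 with coordinate zt = sqrt(t^2-4d) = 2 xi - t.
  Writing f = t^2 - 4d (simple zero at 0), the curve is parametrised by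
  z(zt) = f^{-1}(zt^2) (compositional inverse) and xi(zt) = (t(z(zt)) + zt)/2.\<close>
definition spec_z :: "complex fps \<Rightarrow> complex fps \<Rightarrow> complex fps" where
  "spec_z t d = fps_inv (t^2 - 4 * d) oo (fps_X ^ 2)"

definition spec_xi :: "complex fps \<Rightarrow> complex fps \<Rightarrow> complex fps" where
  "spec_xi t d = fps_const (1/2) * ((t oo spec_z t d) + fps_X)"

text \<open>mu (d zt)^{-1} = xi * dz/dzt, with mu = xi dz restricted to the curve.\<close>
definition mu_over_dzt :: "complex fps \<Rightarrow> complex fps \<Rightarrow> complex fps" where
  "mu_over_dzt t d = spec_xi t d * fps_deriv (spec_z t d)"

definition Yset :: "lser \<Rightarrow> lser set" where
  "Yset a = {r. unit_pow (fps_nth r 0) \<and>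
     (let a' = a + fps_X * inverse r * zt_deriv r in
        in_pole1_PS2 a' \<and> zt_res a' = - fps_const (1/2) * fps_X)}"

end

theory Submission
  imports Defs
begin
unbundle fps_syntax
notation fls_nth (infixl \<open>$$\<close> 75)

lemma in_pow_iff: "in_pow f \<longleftrightarrow> (\<forall>k<0. f $$ k = 0)"
proof
  assume "in_pow f" then show "\<forall>k<0. f $$ k = 0"
    unfolding in_pow_def by (auto intro: nth_less_subdegree_zero)
next
  assume "\<forall>k<0. f $$ k = 0" then show "in_pow f"
    unfolding in_pow_def using fls_subdegree_ge0I by blast
qed

lemma in_pole1_iff: "in_pole1 f \<longleftrightarrow> (\<forall>k< -1. f $$ k = 0)"
proof
  assume "in_pole1 f" then show "\<forall>k< -1. f $$ k = 0"
    unfolding in_pole1_def by (auto intro: nth_less_subdegree_zero)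
next
  assume "\<forall>k< -1. f $$ k = 0" then show "in_pole1 f"
    unfolding in_pole1_def using fls_subdegree_geI by blast
qed

lemma in_pow_add: "in_pow f \<Longrightarrow> in_pow g \<Longrightarrow> in_pow (f + g)"
  by (simp add: in_pow_iff)
lemma in_pow_diff: "in_pow f \<Longrightarrow> in_pow g \<Longrightarrow> in_pow (f - g)"
  by (simp add: in_pow_iff)
lemma in_pow_uminus: "in_pow f \<Longrightarrow> in_pow (- f)"
  by (simp add: in_pow_iff)
lemma in_pow_0: "in_pow 0" by (simp add: in_pow_def)
lemma in_pow_1: "in_pow 1" by (simp add: in_pow_def)
lemma in_pow_mult: "in_pow f \<Longrightarrow> in_pow g \<Longrightarrow> in_pow (f * (g::complex fls))"
  unfolding in_pow_def by (cases "f = 0"; cases "g = 0") auto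
lemma in_pow_sum: "(\<And>i. i \<in> A \<Longrightarrow> in_pow (f i)) \<Longrightarrow> in_pow (\<Sum>i\<in>A. f i)"
  by (simp add: in_pow_iff fls_nth_sum)
lemma in_pow_deriv: "in_pow f \<Longrightarrow> in_pow (fls_deriv f)"
  unfolding in_pow_iff
proof (intro allI impI)
  fix k :: int assume h: "\<forall>k<0. f $$ k = 0" and k: "k < 0"
  show "fls_deriv f $$ k = 0"
  proof (cases "k = -1")
    case False then show ?thesis using h k by simp
  qed simp
qed
lemma in_pow_fps: "in_pow (fps_to_fls p)"
  by (simp add: in_pow_iff)
lemma deriv_in_pow_imp: "in_pow (fls_deriv f) \<Longrightarrow> in_pow f"
  unfolding in_pow_iff
proof (intro allI impI)
  fix k :: int assume h: "\<forall>k<0. fls_deriv f $$ k = 0" and k: "k < 0"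
  have "of_int k * f $$ k = 0" using h[rule_format, of "k-1"] k by simp
  then show "f $$ k = 0" using k by simp
qed
lemma in_pow_pole1: "in_pow f \<Longrightarrow> in_pole1 f"
  by (simp add: in_pow_iff in_pole1_iff)
lemma in_pole1_add: "in_pole1 f \<Longrightarrow> in_pole1 g \<Longrightarrow> in_pole1 (f + g)"
  by (simp add: in_pole1_iff)
lemma in_pole1_diff: "in_pole1 f \<Longrightarrow> in_pole1 g \<Longrightarrow> in_pole1 (f - g)"
  by (simp add: in_pole1_iff)
lemma pole1_res0: "in_pole1 f \<Longrightarrow> fls_residue f = 0 \<Longrightarrow> in_pow f"
  unfolding in_pole1_iff in_pow_iff fls_residue_def
proof (intro allI impI)
  fix k :: int assume "\<forall>k< -1. f $$ k = 0" "f $$ -1 = 0" "k < 0"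
  then show "f $$ k = 0" by (cases "k = -1") auto
qed
lemma in_pow_res: "in_pow f \<Longrightarrow> fls_residue f = 0"
  by (simp add: in_pow_iff)

lemma unit_pow_iff: "unit_pow f \<longleftrightarrow> in_pow f \<and> f $$ 0 \<noteq> 0"
proof
  assume "unit_pow f" then show "in_pow f \<and> f $$ 0 \<noteq> 0"
    unfolding unit_pow_def in_pow_def using nth_fls_subdegree_nonzero by fastforce
next
  assume h: "in_pow f \<and> f $$ 0 \<noteq> 0"
  then have "f \<noteq> 0" by auto
  moreover have "fls_subdegree f \<le> 0" using h fls_subdegree_leI by blast
  ultimately show "unit_pow f" using h unfolding unit_pow_def in_pow_def by auto
qed
lemma unit_pow_mult: "unit_pow f \<Longrightarrow> unit_pow g \<Longrightarrow> unit_pow (f * (g::complex fls))"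
  unfolding unit_pow_def by auto
lemma unit_pow_inverse: "unit_pow (f::complex fls) \<Longrightarrow> unit_pow (inverse f)"
  unfolding unit_pow_def by simp

lemma zt_deriv_nth [simp]: "zt_deriv r $ n = fls_deriv (r $ n)"
  by (simp add: zt_deriv_def)
lemma zt_res_nth [simp]: "zt_res r $ n = fls_residue (r $ n)"
  by (simp add: zt_res_def)
lemma zt_deriv_add [simp]: "zt_deriv (f + g) = zt_deriv f + zt_deriv g"
  by (rule fps_ext) simp
lemma zt_deriv_diff [simp]: "zt_deriv (f - g) = zt_deriv f - zt_deriv g"
  by (rule fps_ext) simp
lemma zt_deriv_one [simp]: "zt_deriv 1 = 0"
  by (rule fps_ext) (simp add: fps_one_nth)
lemma zt_deriv_mult: "zt_deriv (f * g) = zt_deriv f * g + f * zt_deriv g"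
proof (rule fps_ext)
  fix n
  have "zt_deriv (f * g) $ n = fls_deriv (\<Sum>i=0..n. f$i * g$(n-i))" by (simp add: fps_mult_nth)
  also have "\<dots> = (\<Sum>i=0..n. fls_deriv (f$i) * g$(n-i) + f$i * fls_deriv (g$(n-i)))"
    by (simp add: fls_deriv_sum add.commute)
  also have "\<dots> = (zt_deriv f * g + f * zt_deriv g) $ n" by (simp add: fps_mult_nth sum.distrib)
  finally show "zt_deriv (f * g) $ n = (zt_deriv f * g + f * zt_deriv g) $ n" .
qed
lemma zt_deriv_fps_deriv: "fps_deriv (zt_deriv f) = zt_deriv (fps_deriv f)"
proof (rule fps_ext)
  fix n
  have "fls_deriv (of_nat (Suc n) * f $ Suc n) = of_nat (Suc n) * fls_deriv (f $ Suc n)"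
    by simp
  then show "fps_deriv (zt_deriv f) $ n = zt_deriv (fps_deriv f) $ n"
    by (simp add: fps_deriv_nth)
qed
lemma zt_deriv_inverse:
  assumes "r $ 0 \<noteq> 0"
  shows "zt_deriv (inverse r) = - zt_deriv r * (inverse r)^2"
proof -
  have ri: "r * inverse r = 1" using assms by (rule inverse_mult_eq_1')
  have "0 = zt_deriv (r * inverse r)" using ri by simp
  also have "\<dots> = zt_deriv r * inverse r + r * zt_deriv (inverse r)" by (rule zt_deriv_mult)
  finally have "0 * inverse r = (zt_deriv r * inverse r + r * zt_deriv (inverse r)) * inverse r"
    by simp
  then have "0 = zt_deriv r * (inverse r)^2 + (r * inverse r) * zt_deriv (inverse r)"
    by (simp add: algebra_simps power2_eq_square)
  then show ?thesis using ri by (simp add: eq_neg_iff_add_eq_0 add.commute)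
qed

definition Lg :: "lser \<Rightarrow> lser" where "Lg r = inverse r * zt_deriv r"

lemma Lg_res_Suc:
  assumes "r $ 0 \<noteq> 0"
  shows "fls_residue (Lg r $ Suc n) = 0"
proof -
  define M where "M = inverse r * fps_deriv r"
  have 1: "fps_deriv (Lg r) = - fps_deriv r * (inverse r)^2 * zt_deriv r + inverse r * zt_deriv (fps_deriv r)"
    unfolding Lg_def using assms by (simp add: fps_inverse_deriv zt_deriv_fps_deriv)
  have 2: "zt_deriv M = - zt_deriv r * (inverse r)^2 * fps_deriv r + inverse r * zt_deriv (fps_deriv r)"
    unfolding M_def using assms by (simp add: zt_deriv_mult zt_deriv_inverse)
  have "fps_deriv (Lg r) = zt_deriv M" unfolding 1 2 by (simp add: mult.commute mult.left_commute)
  then have "fps_deriv (Lg r) $ n = fls_deriv (M $ n)" by simp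
  then have "of_nat (Suc n) * Lg r $ Suc n = fls_deriv (M $ n)" by (simp add: fps_deriv_nth)
  then have "fls_residue (of_nat (Suc n) * Lg r $ Suc n) = 0" by (simp add: fls_residue_deriv)
  then have "of_nat (Suc n) * fls_residue (Lg r $ Suc n) = 0"
    by (simp add: fls_residue_def del: of_nat_Suc)
  then show ?thesis using of_nat_neq_0[of n, where 'a=complex] by simp
qed

lemma Lg_0:
  assumes "unit_pow (r $ 0)"
  shows "in_pow (Lg r $ 0)"
proof -
  have "Lg r $ 0 = inverse (r $ 0) * fls_deriv (r $ 0)" by (simp add: Lg_def)
  moreover have "in_pow (inverse (r $ 0))" using unit_pow_inverse[OF assms] unit_pow_iff by blast
  moreover have "in_pow (fls_deriv (r $ 0))" using assms unit_pow_iff in_pow_deriv by blast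
  ultimately show ?thesis using in_pow_mult by simp
qed

lemma Lg_mult:
  assumes "u $ 0 \<noteq> 0" "r $ 0 \<noteq> 0"
  shows "Lg (u * r) = Lg u + Lg r"
proof -
  have iu: "inverse u * u = 1" and ir: "inverse r * r = 1" using assms by (auto intro: inverse_mult_eq_1)
  have "Lg (u*r) = inverse u * inverse r * (zt_deriv u * r + u * zt_deriv r)"
    by (simp add: Lg_def zt_deriv_mult fps_inverse_mult)
  also have "\<dots> = (inverse u * zt_deriv u) * (inverse r * r) + (inverse r * zt_deriv r) * (inverse u * u)"
    by (simp add: distrib_left mult_ac)
  also have "\<dots> = inverse u * zt_deriv u + inverse r * zt_deriv r"
    using iu ir by (simp only: mult_1_right)
  finally show ?thesis by (simp only: Lg_def)
qed

lemma PS2_solve: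
  assumes fgh: "f * g = h" and f: "in_PS2 f" and f0: "unit_pow (f $ 0)" and h: "in_PS2 h"
  shows "in_PS2 g"
  unfolding in_PS2_def
proof
  fix n show "in_pow (g $ n)"
  proof (induction n rule: less_induct)
    case (less n)
    define S where "S = (\<Sum>i\<in>{Suc 0..n}. f$i * g$(n-i))"
    have "h $ n = (\<Sum>i=0..n. f$i * g$(n-i))" using fgh by (auto simp: fps_mult_nth)
    also have "\<dots> = f$0 * g$n + S" unfolding S_def by (simp add: sum.atLeast_Suc_atMost)
    finally have e: "h $ n = f$0 * g$n + S" .
    have nz: "f $ 0 \<noteq> 0" using f0 unit_pow_def by auto
    have "g $ n = inverse (f$0) * (h $ n - S)" using e nz by (simp add: field_simps)
    moreover have "in_pow S" unfolding S_def
      by (rule in_pow_sum, rule in_pow_mult) (use f less in \<open>auto simp: in_PS2_def\<close>)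
    moreover have "in_pow (inverse (f$0))" using unit_pow_inverse[OF f0] unit_pow_iff by blast
    ultimately show ?case using h in_pow_mult in_pow_diff unfolding in_PS2_def by simp
  qed
qed

lemma PS2_from_Lg:
  assumes u0: "unit_pow (u $ 0)" and c: "in_PS2 (Lg u)"
  shows "in_PS2 u"
  unfolding in_PS2_def
proof
  fix n show "in_pow (u $ n)"
  proof (induction n rule: less_induct)
    case (less n)
    show ?case
    proof (cases n)
      case 0 then show ?thesis using u0 unit_pow_iff by blast
    next
      case (Suc m)
      have nz: "u $ 0 \<noteq> 0" using u0 unit_pow_def by auto
      have uc: "u * Lg u = zt_deriv u" unfolding Lg_def using nz
        by (metis inverse_mult_eq_1' mult.assoc mult_1)
      define S where "S = (\<Sum>i=0..m. u$i * Lg u $(n-i))"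
      have "fls_deriv (u $ n) = (\<Sum>i=0..n. u$i * Lg u $(n-i))"
        using uc by (metis fps_mult_nth zt_deriv_nth)
      also have "\<dots> = S + u $ n * Lg u $ 0" unfolding S_def Suc by simp
      finally have e: "fls_deriv (u $ n) = S + u $ n * (inverse (u$0) * fls_deriv (u$0))"
        by (simp add: Lg_def)
      define q where "q = u $ n / u $ 0"
      have un: "u $ n = q * u $ 0" unfolding q_def using nz by simp
      have "fls_deriv (u $ n) = fls_deriv q * u $ 0 + q * fls_deriv (u $ 0)"
        unfolding un by simp
      with e have "fls_deriv q * u $ 0 = S" unfolding q_def using nz
        by (simp add: field_simps)
      then have dq: "fls_deriv q = S * inverse (u $ 0)" using nz by (simp add: field_simps)
      have "in_pow S" unfolding S_def
        by (rule in_pow_sum, rule in_pow_mult) (use c less Suc in \<open>auto simp: in_PS2_def\<close>)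
      moreover have "in_pow (inverse (u$0))" using unit_pow_inverse[OF u0] unit_pow_iff by blast
      ultimately have "in_pow (fls_deriv q)" unfolding dq by (rule in_pow_mult)
      then have "in_pow q" by (rule deriv_in_pow_imp)
      then show ?thesis unfolding un using u0 unit_pow_iff in_pow_mult by blast
    qed
  qed
qed

definition tgt :: "nat \<Rightarrow> complex" where "tgt n = (if n = 1 then -1/2 else 0)"

lemma res_target_iff: "zt_res b = - fps_const (1/2) * fps_X \<longleftrightarrow> (\<forall>n. fls_residue (b $ n) = tgt n)"
proof -
  have "(- fps_const (1/2) * fps_X :: complex fps) $ n = tgt n" for n
    by (simp add: tgt_def)
  then show ?thesis by (simp add: fps_eq_iff)
qed

lemma aprime_nth:
  "(a + fps_X * inverse r * zt_deriv r) $ 0 = a $ 0"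
  "(a + fps_X * inverse r * zt_deriv r) $ Suc n = a $ Suc n + Lg r $ n"
  by (simp_all add: Lg_def mult.assoc)

lemma Y_iff:
  assumes a0: "in_pow (a $ 0)"
  shows "r \<in> Yset a \<longleftrightarrow> unit_pow (r$0) \<and> in_pole1 (a$1) \<and> fls_residue (a$1) = -1/2
          \<and> (\<forall>n\<ge>1. in_pole1 (a $ Suc n + Lg r $ n)) \<and> (\<forall>n\<ge>2. fls_residue (a $ n) = 0)"
proof (cases "unit_pow (r$0)")
  case False then show ?thesis by (simp add: Yset_def)
next
  case True
  define b where "b = a + fps_X * inverse r * zt_deriv r"
  have bS: "b $ Suc n = a $ Suc n + Lg r $ n" for n unfolding b_def by (rule aprime_nth(2))
  have b0: "b $ 0 = a $ 0" unfolding b_def by (rule aprime_nth(1))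
  have r0: "r $ 0 \<noteq> 0" using True unit_pow_def by auto
  have L0: "in_pow (Lg r $ 0)" using Lg_0[OF True] .
  have Y: "r \<in> Yset a \<longleftrightarrow> (\<forall>n. in_pole1 (b $ n)) \<and> (\<forall>n. fls_residue (b $ n) = tgt n)"
    using True unfolding Yset_def b_def Let_def in_pole1_PS2_def res_target_iff by simp
  have P: "(\<forall>n. in_pole1 (b $ n)) \<longleftrightarrow> in_pole1 (a$1) \<and> (\<forall>n\<ge>1. in_pole1 (a $ Suc n + Lg r $ n))"
  proof
    assume h: "\<forall>n. in_pole1 (b $ n)"
    have "in_pole1 (a$1 + Lg r $ 0)" using h[rule_format, of "Suc 0"] unfolding bS by simp
    then have "in_pole1 (a$1 + Lg r $ 0 - Lg r $ 0)" using L0 in_pole1_diff in_pow_pole1 by blast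
    moreover have "in_pole1 (a $ Suc n + Lg r $ n)" for n
      using h[rule_format, of "Suc n"] by (simp add: bS b0)
    ultimately show "in_pole1 (a$1) \<and> (\<forall>n\<ge>1. in_pole1 (a $ Suc n + Lg r $ n))" by simp
  next
    assume h: "in_pole1 (a$1) \<and> (\<forall>n\<ge>1. in_pole1 (a $ Suc n + Lg r $ n))"
    show "\<forall>n. in_pole1 (b $ n)"
    proof
      fix n show "in_pole1 (b $ n)"
      proof (cases n)
        case 0 then show ?thesis using a0 in_pow_pole1 by (simp add: bS b0)
      next
        case (Suc m)
        show ?thesis
        proof (cases m)
          case 0 then show ?thesis using Suc h L0 in_pole1_add in_pow_pole1 by (simp add: bS b0)
        next
          case (Suc k) then show ?thesis using \<open>n = Suc m\<close> h by (simp add: bS b0)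
        qed
      qed
    qed
  qed
  have R: "(\<forall>n. fls_residue (b $ n) = tgt n) \<longleftrightarrow> fls_residue (a$1) = -1/2 \<and> (\<forall>n\<ge>2. fls_residue (a $ n) = 0)"
  proof -
    have "fls_residue (b $ n) = fls_residue (a $ n)" for n
    proof (cases n)
      case 0 then show ?thesis by (simp add: bS b0 del: fls_residue_def)
    next
      case (Suc m)
      have "fls_residue (Lg r $ m) = 0"
      proof (cases m)
        case 0 then show ?thesis using L0 in_pow_res by simp
      next
        case (Suc k) then show ?thesis using Lg_res_Suc[OF r0] by simp
      qed
      then show ?thesis using Suc by (simp add: bS b0 fls_residue_add del: fls_residue_def)
    qed
    moreover have "fls_residue (a $ 0) = 0" using a0 in_pow_res by blast
    ultimately show ?thesis unfolding tgt_def
      by (metis One_nat_def Suc_1 less_2_cases_iff not_le numeral_One zero_neq_one)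
  qed
  show ?thesis using Y P R True by blast
qed

definition Ifn :: "complex fls \<Rightarrow> complex fls" where
  "Ifn f = Abs_fls (\<lambda>m. if m \<le> -1 then f $$ (m-1) / of_int m else 0)"

lemma Ifn_nth: "Ifn f $$ m = (if m \<le> -1 then f $$ (m-1) / of_int m else 0)"
proof -
  obtain N where N: "\<forall>n<N. f$$n = 0" by (elim fls_nth_vanishes_belowE)
  hence "\<forall>n<N. (if n \<le> -1 then f $$ (n-1) / of_int n else 0) = 0" by auto
  thus ?thesis unfolding Ifn_def by (rule nth_Abs_fls_lower_bound)
qed

lemma Ifn_pole1: "in_pole1 (f - fls_deriv (Ifn f))"
  unfolding in_pole1_iff
proof (intro allI impI)
  fix k :: int assume k: "k < -1"
  then have "(of_int (k+1) :: complex) \<noteq> 0" unfolding of_int_eq_0_iff by simp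
  then show "(f - fls_deriv (Ifn f)) $$ k = 0" using k by (simp add: Ifn_nth)
qed

function rcf :: "lser \<Rightarrow> nat \<Rightarrow> complex fls \<times> complex fls" where
  "rcf a 0 = (1, 0)"
| "rcf a (Suc k) = (let S = (\<Sum>j\<in>{1..k}. fst (rcf a j) * snd (rcf a (Suc k - j)));
                       r = - Ifn (a $ Suc (Suc k) - S) in (r, fls_deriv r - S))"
  by pat_completeness auto
termination by (relation "measure (\<lambda>(a,k). k)") auto

lemma exists_Y:
  assumes a0: "in_pow (a $ 0)" and a1: "in_pole1 (a$1)" and res1: "fls_residue (a$1) = -1/2"
    and res2: "\<forall>n\<ge>2. fls_residue (a $ n) = 0"
  shows "Yset a \<noteq> {}"
proof -
  define r where "r = Abs_fps (\<lambda>n. fst (rcf a n))"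
  define c where "c = Abs_fps (\<lambda>n. snd (rcf a n))"
  define S where "S k = (\<Sum>j\<in>{1..k}. r $ j * c $ (Suc k - j))" for k
  have r0: "r $ 0 = 1" and c0: "c $ 0 = 0" by (simp_all add: r_def c_def)
  have SS: "S k = (\<Sum>j\<in>{1..k}. fst (rcf a j) * snd (rcf a (Suc k - j)))" for k
    by (simp add: S_def r_def c_def del: rcf.simps)
  have rS: "r $ Suc k = - Ifn (a $ Suc (Suc k) - S k)" for k
  proof -
    have "r $ Suc k = fst (rcf a (Suc k))" by (simp add: r_def del: rcf.simps)
    also have "\<dots> = - Ifn (a $ Suc (Suc k) - S k)" by (simp only: rcf.simps(2) SS Let_def fst_conv)
    finally show ?thesis .
  qed
  have cS: "c $ Suc k = fls_deriv (r $ Suc k) - S k" for k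
  proof -
    have "c $ Suc k = snd (rcf a (Suc k))" by (simp add: c_def del: rcf.simps)
    also have "\<dots> = fls_deriv (- Ifn (a $ Suc (Suc k) - S k)) - S k" by (simp only: rcf.simps(2) SS Let_def snd_conv)
    finally show ?thesis using rS by simp
  qed
  have rc: "r * c = zt_deriv r"
  proof (rule fps_ext)
    fix n show "(r * c) $ n = zt_deriv r $ n"
    proof (cases n)
      case 0 then show ?thesis using r0 c0 by simp
    next
      case (Suc k)
      have "(r * c) $ n = (\<Sum>i=0..Suc k. r$i * c$(Suc k - i))" by (simp only: Suc fps_mult_nth)
      also have "\<dots> = r$0 * c$(Suc k - 0) + (\<Sum>i=Suc 0..Suc k. r$i * c$(Suc k - i))"
        by (rule sum.atLeast_Suc_atMost) simp
      also have "(\<Sum>i=Suc 0..Suc k. r$i * c$(Suc k - i)) = S k + r $ Suc k * c $ (Suc k - Suc k)"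
        unfolding S_def by (simp only: sum.cl_ivl_Suc One_nat_def Suc_less_eq not_less0 if_False diff_self_eq_0)
      also have "r$0 * c$(Suc k - 0) + (S k + r $ Suc k * c $ (Suc k - Suc k)) = c$(Suc k) + S k"
        using r0 c0 by simp
      also have "\<dots> = fls_deriv (r $ Suc k)" using cS by simp
      finally show ?thesis using Suc by simp
    qed
  qed
  have Lr: "Lg r = c"
  proof -
    have "Lg r = (inverse r * r) * c" unfolding Lg_def rc[symmetric] by (simp add: mult.assoc)
    also have "inverse r * r = 1" using r0 by (intro inverse_mult_eq_1) simp
    finally show ?thesis by simp
  qed
  have P: "in_pole1 (a $ Suc n + Lg r $ n)" if "n \<ge> 1" for n
  proof -
    define k where "k = n - 1"
    have k: "n = Suc k" using that unfolding k_def by simp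
    have "a $ Suc n + Lg r $ n = (a $ Suc (Suc k) - S k) - fls_deriv (Ifn (a $ Suc (Suc k) - S k))"
      unfolding Lr k cS rS by simp
    then show ?thesis using Ifn_pole1 by simp
  qed
  have U: "unit_pow (r $ 0)" using r0 by (simp add: unit_pow_def)
  have "r \<in> Yset a" unfolding Y_iff[OF a0]
    using P U a1 res1 res2 by (intro conjI allI impI) auto
  then show ?thesis by blast
qed

lemma Lg_unit_PS2:
  assumes "u \<in> units_PS2" shows "in_PS2 (Lg u)"
proof -
  have u: "in_PS2 u" and u0: "u $ 0 $$ 0 \<noteq> 0" using assms by (auto simp: units_PS2_def)
  have up: "unit_pow (u $ 0)" using u u0 unit_pow_iff in_PS2_def by blast
  have nz: "u $ 0 \<noteq> 0" using u0 by auto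
  have "u * Lg u = zt_deriv u" unfolding Lg_def using nz
    by (metis inverse_mult_eq_1' mult.assoc mult_1)
  moreover have "in_PS2 (zt_deriv u)" using u in_pow_deriv by (simp add: in_PS2_def)
  ultimately show ?thesis using PS2_solve u up by blast
qed

theorem lemma4p8:
  fixes t d :: "complex fps" and a :: "complex fls fps"
  assumes "fps_nth (t^2 - 4 * d) 0 = 0" and "fps_nth (t^2 - 4 * d) 1 \<noteq> 0"
    and "fps_nth a 0 = fps_to_fls (mu_over_dzt t d)"
  shows "(Yset a = {} \<or> (\<exists>r \<in> Yset a. Yset a = {u * r | u. u \<in> units_PS2}))
         \<and> (Yset a \<noteq> {} \<longleftrightarrow>
              (in_pole1 (fps_nth a 1) \<and> zt_res a = - fps_const (1/2) * fps_X))"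
proof -
  have a0: "in_pow (a $ 0)" using assms(3) in_pow_fps by simp
  have res0: "fls_residue (a $ 0) = 0" using a0 in_pow_res by blast
  have RES: "zt_res a = - fps_const (1/2) * fps_X \<longleftrightarrow>
      fls_residue (a$1) = -1/2 \<and> (\<forall>n\<ge>2. fls_residue (a $ n) = 0)"
    unfolding res_target_iff tgt_def using res0
    by (metis One_nat_def Suc_1 less_2_cases_iff not_le numeral_One zero_neq_one)
  have part2: "Yset a \<noteq> {} \<longleftrightarrow> (in_pole1 (a $ 1) \<and> zt_res a = - fps_const (1/2) * fps_X)"
  proof
    assume "Yset a \<noteq> {}"
    then obtain r where "r \<in> Yset a" by blast
    then show "in_pole1 (a $ 1) \<and> zt_res a = - fps_const (1/2) * fps_X"
      unfolding RES Y_iff[OF a0] by blast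
  next
    assume "in_pole1 (a $ 1) \<and> zt_res a = - fps_const (1/2) * fps_X"
    then show "Yset a \<noteq> {}" unfolding RES using exists_Y[OF a0] by blast
  qed
  have part1: "Yset a = {u * r | u. u \<in> units_PS2}" if r: "r \<in> Yset a" for r
  proof
    have rY: "unit_pow (r$0) \<and> in_pole1 (a$1) \<and> fls_residue (a$1) = -1/2
          \<and> (\<forall>n\<ge>1. in_pole1 (a $ Suc n + Lg r $ n)) \<and> (\<forall>n\<ge>2. fls_residue (a $ n) = 0)"
      using r unfolding Y_iff[OF a0] .
    have r0: "r $ 0 \<noteq> 0" using rY unit_pow_def by auto
    show "{u * r | u. u \<in> units_PS2} \<subseteq> Yset a"
    proof safe
      fix u assume uU: "u \<in> units_PS2"
      have u: "in_PS2 u" and u0: "u $ 0 $$ 0 \<noteq> 0" using uU by (auto simp: units_PS2_def)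
      have up: "unit_pow (u $ 0)" using u u0 unit_pow_iff in_PS2_def by blast
      have nz: "u $ 0 \<noteq> 0" using u0 by auto
      have Lu: "in_PS2 (Lg u)" by (rule Lg_unit_PS2[OF uU])
      have L: "Lg (u * r) = Lg u + Lg r" by (rule Lg_mult[OF nz r0])
      have "unit_pow ((u * r) $ 0)" using up rY unit_pow_mult by simp
      moreover have "in_pole1 (a $ Suc n + Lg (u * r) $ n)" if "n \<ge> 1" for n
      proof -
        have "a $ Suc n + Lg (u * r) $ n = (a $ Suc n + Lg r $ n) + Lg u $ n" using L by simp
        then show ?thesis using rY that Lu in_pole1_add in_pow_pole1 unfolding in_PS2_def by metis
      qed
      ultimately show "u * r \<in> Yset a" unfolding Y_iff[OF a0] using rY by blast
    qed
    show "Yset a \<subseteq> {u * r | u. u \<in> units_PS2}"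
    proof
      fix s assume s: "s \<in> Yset a"
      have sY: "unit_pow (s$0) \<and> (\<forall>n\<ge>1. in_pole1 (a $ Suc n + Lg s $ n))"
        using s unfolding Y_iff[OF a0] by blast
      define u where "u = s * inverse r"
      have ir: "inverse r * r = 1" using r0 by (rule inverse_mult_eq_1)
      have us: "u * r = s" unfolding u_def using ir by (simp add: mult.assoc)
      have u0: "u $ 0 = s $ 0 * inverse (r $ 0)" unfolding u_def by simp
      have up: "unit_pow (u $ 0)" unfolding u0 using sY rY unit_pow_mult unit_pow_inverse by blast
      have nz: "u $ 0 \<noteq> 0" using up unit_pow_def by auto
      have L: "Lg s = Lg u + Lg r" using Lg_mult[OF nz r0] us by simp
      have "in_pow (Lg u $ n)" for n
      proof (cases n)
        case 0 then show ?thesis using Lg_0[OF up] by simp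
      next
        case (Suc m)
        have e: "Lg u $ n = (a $ Suc n + Lg s $ n) - (a $ Suc n + Lg r $ n)" using L by simp
        have "in_pole1 (a $ Suc n + Lg s $ n)" "in_pole1 (a $ Suc n + Lg r $ n)"
          using sY rY Suc by auto
        then have "in_pole1 (Lg u $ n)" unfolding e by (rule in_pole1_diff)
        moreover have "fls_residue (Lg u $ n) = 0" using Lg_res_Suc[OF nz] Suc by simp
        ultimately show ?thesis by (rule pole1_res0)
      qed
      then have "in_PS2 (Lg u)" by (simp add: in_PS2_def)
      then have "in_PS2 u" using PS2_from_Lg up by blast
      moreover have "u $ 0 $$ 0 \<noteq> 0" using up unit_pow_iff by blast
      ultimately have "u \<in> units_PS2" by (simp add: units_PS2_def)
      then show "s \<in> {u * r | u. u \<in> units_PS2}" using us by blast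
    qed
  qed
  show ?thesis using part1 part2 by blast
qed

end
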